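(* Let $\mathcal{D}$ be a set of Borel probability distributions on $\mathbb{R}^n$, $(\Theta,\rho)$ a metric space, $\theta:\mathcal D\to\Theta$, $\tau>0$, $\varepsilon>0$, $\alpha\in[0,1)$. Any randomized SQ algorithm estimating $\theta(D)$ over $\mathcal{D}$ with precision $\varepsilon$ and probability of success at least $1-\alpha$ must make at least $$q\ge\frac{\log\big((1-\alpha)\,\mathrm{pk}_{(\theta(\mathcal D),\rho)}(\varepsilon)\big)}{\log(1+\lfloor1/\tau\rfloor)}$$ queries to $\mathrm{STAT}(\tau)$, where $\theta(\mathcal D)=\{\theta(D):D\in\mathcal D\}$.
   Context: For $\mathcal{M}\subseteq\Theta$, an $\varepsilon$-packing of $\mathcal M$ is a subset $\{\theta_1,\dots,\theta_k\}\subseteq\mathcal M$ with $\rho(\theta_i,\theta_j)>2\varepsilon$ for all $i\neq j$; $\mathrm{pk}_{(\mathcal M,\rho)}(\varepsilon)$ is the largest cardinality of such a packing (possibly infinite). SQ framework: a $\mathrm{STAT}(\tau)$ oracle for $D$ answers each measurable query $r:\mathbb{R}^n\to[-1,1]$ with an arbitrary adversarial real $a$ (possibly depending on previous queries) with $|a-\mathbb{E}_D[r]|\le\tau$. A deterministic SQ algorithm making $q$ queries chooses each query as a function of previous answers and outputs an element of $\Theta$ that is a function of all $q$ answers. A randomized SQ algorithm is a probability distribution over deterministic SQ algorithms making $q$ queries; it estimates $\theta$ over $\mathcal{D}$ with precision $\varepsilon$ and probability of success $1-\alpha$ if for every $D\in\mathcal D$ and every valid $\mathrm{STAT}(\tau)$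 oracle for $D$, with probability at least $1-\alpha$ its output $\hat\theta$ satisfies $\rho(\theta(D),\hat\theta)\le\varepsilon$. *)

theory Defs
  imports "HOL-Probability.Probability"
begin

definition valid_query :: "(real^'n \<Rightarrow> real) \<Rightarrow> bool" where
  "valid_query r \<longleftrightarrow> r \<in> borel_measurable borel \<and> (\<forall>x. \<bar>r x\<bar> \<le> 1)"

text \<open>A STAT(tau) oracle for D: the answer to the current query (the last element of the
  list of queries asked so far) may depend adversarially on the whole query history,
  but must be within tau of the true expectation.\<close>

definition stat_oracle :: "real \<Rightarrow> (real^'n) measure \<Rightarrow> ((real^'n \<Rightarrow> real) list \<Rightarrow> real) \<Rightarrow> bool" where
  "stat_oracle \<tau> D Orc \<longleftrightarrow>
     (\<forall>hs. hs \<noteq> [] \<longrightarrow> valid_query (last hs) \<longrightarrow>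
        \<bar>Orc hs - (\<integral>x. last hs x \<partial>D)\<bar> \<le> \<tau>)"

text \<open>A deterministic adaptive SQ algorithm is given by a query-choice function Q
  (next query as a function of the answers received so far) and an output function out
  (applied to all q answers).\<close>

fun sq_run :: "(real list \<Rightarrow> (real^'n \<Rightarrow> real)) \<Rightarrow> ((real^'n \<Rightarrow> real) list \<Rightarrow> real) \<Rightarrow> nat \<Rightarrow> real list" where
  "sq_run Q Orc 0 = []"
| "sq_run Q Orc (Suc k) =
     (let as = sq_run Q Orc k in as @ [Orc (map (\<lambda>j. Q (take j as)) [0..<Suc k])])"

definition det_sq_alg :: "nat \<Rightarrow> 'b set \<Rightarrow> (real list \<Rightarrow> (real^'n \<Rightarrow> real)) \<Rightarrow> (real list \<Rightarrow> 'b) \<Rightarrow> bool" where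
  "det_sq_alg q \<Theta> Q out \<longleftrightarrow>
     (\<forall>as. length as < q \<longrightarrow> valid_query (Q as)) \<and> (\<forall>as. out as \<in> \<Theta>)"

text \<open>A randomized SQ algorithm making q queries: a probability space P together with a
  map A from sample points to deterministic SQ algorithms making q queries. It estimates
  theta over the family with precision eps and success probability 1 - alpha if for every
  D in the family and every valid STAT(tau) oracle for D, the success event has
  (inner) probability at least 1 - alpha, i.e. contains a measurable set of probability
  at least 1 - alpha.\<close>

definition rand_sq_estimates ::
  "nat \<Rightarrow> real \<Rightarrow> 'b set \<Rightarrow> ('b \<Rightarrow> 'b \<Rightarrow> real) \<Rightarrow> (real^'n) measure set \<Rightarrow> ((real^'n) measure \<Rightarrow> 'b)
   \<Rightarrow> real \<Rightarrow> real \<Rightarrow> 'c measure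
   \<Rightarrow> ('c \<Rightarrow> (real list \<Rightarrow> (real^'n \<Rightarrow> real)) \<times> (real list \<Rightarrow> 'b)) \<Rightarrow> bool" where
  "rand_sq_estimates q \<tau> \<Theta> \<rho> \<D> \<theta> \<epsilon> \<alpha> P A \<longleftrightarrow>
     prob_space P \<and>
     (\<forall>c\<in>space P. det_sq_alg q \<Theta> (fst (A c)) (snd (A c))) \<and>
     (\<forall>D\<in>\<D>. \<forall>Orc. stat_oracle \<tau> D Orc \<longrightarrow>
        (\<exists>S\<in>sets P. S \<subseteq> {c\<in>space P. \<rho> (\<theta> D) (snd (A c) (sq_run (fst (A c)) Orc q)) \<le> \<epsilon>}
                   \<and> 1 - \<alpha> \<le> measure P S))"

text \<open>Packing number: supremum (in enat) of cardinalities of eps-packings; it is infinity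
  iff there are arbitrarily large (in particular, infinite) packings.\<close>

definition is_packing :: "'b set \<Rightarrow> ('b \<Rightarrow> 'b \<Rightarrow> real) \<Rightarrow> real \<Rightarrow> 'b set \<Rightarrow> bool" where
  "is_packing M \<rho> \<epsilon> S \<longleftrightarrow> S \<subseteq> M \<and> (\<forall>x\<in>S. \<forall>y\<in>S. x \<noteq> y \<longrightarrow> \<rho> x y > 2 * \<epsilon>)"

definition packing_number :: "'b set \<Rightarrow> ('b \<Rightarrow> 'b \<Rightarrow> real) \<Rightarrow> real \<Rightarrow> enat" where
  "packing_number M \<rho> \<epsilon> = Sup {enat (card S) | S. finite S \<and> is_packing M \<rho> \<epsilon> S}"

end

theory Submission imports Defs begin

definition rnd :: "real \<Rightarrow> nat \<Rightarrow> real \<Rightarrow> real" where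
  "rnd \<tau> m x = -1 + \<tau> + 2*\<tau>*real (min (m-1) (nat \<lfloor>(x+1)/(2*\<tau>)\<rfloor>))"

lemma rnd_close:
  assumes "\<tau> > 0" "m = Suc (nat \<lfloor>1/\<tau>\<rfloor>)" "\<bar>x\<bar> \<le> 1"
  shows "\<bar>rnd \<tau> m x - x\<bar> \<le> \<tau>"
proof -
  define t where "t = (x+1)/(2*\<tau>)"
  have t0: "t \<ge> 0" using assms by (simp add: t_def)
  have t1: "t \<le> 1/\<tau>" using assms by (simp add: t_def field_simps)
  have fl: "\<lfloor>t\<rfloor> \<le> \<lfloor>1/\<tau>\<rfloor>" using t1 floor_mono by blast
  have f0: "\<lfloor>t\<rfloor> \<ge> 0" using t0 by simp
  have k: "min (m-1) (nat \<lfloor>t\<rfloor>) = nat \<lfloor>t\<rfloor>" using fl f0 assms(2) by auto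
  have kr: "real (nat \<lfloor>t\<rfloor>) = of_int \<lfloor>t\<rfloor>" using f0 by simp
  have a: "of_int \<lfloor>t\<rfloor> \<le> t" "t < of_int \<lfloor>t\<rfloor> + 1" by linarith+
  have x: "x = 2*\<tau>*t - 1" using assms by (simp add: t_def field_simps)
  have "rnd \<tau> m x - x = \<tau> - 2*\<tau>*(t - of_int \<lfloor>t\<rfloor>)"
    unfolding rnd_def t_def[symmetric] k kr using x by (simp add: algebra_simps)
  moreover have b: "0 \<le> t - of_int \<lfloor>t\<rfloor>" "t - of_int \<lfloor>t\<rfloor> \<le> 1" using a by linarith+
  moreover have "0 \<le> 2*\<tau>*(t - of_int \<lfloor>t\<rfloor>)" using b assms(1) by simp
  moreover have "2*\<tau>*(t - of_int \<lfloor>t\<rfloor>) \<le> 2*\<tau>*1"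
    using b assms(1) by (intro mult_left_mono) auto
  ultimately show ?thesis by linarith
qed

lemma rnd_range: "rnd \<tau> m x \<in> (\<lambda>k. -1 + \<tau> + 2*\<tau>*real k) ` {..<m} \<or> m = 0"
  unfolding rnd_def by (cases m) auto

lemma sq_run_props: "length (sq_run Q Orc k) = k \<and> set (sq_run Q Orc k) \<subseteq> range Orc"
  by (induction k) (auto simp: Let_def)


lemma stat_ok:
  fixes D :: "(real^'n) measure"
  assumes "prob_space D" "sets D = sets borel" "\<tau> > 0" "m = Suc (nat \<lfloor>1/\<tau>\<rfloor>)"
  shows "stat_oracle \<tau> D (\<lambda>hs. rnd \<tau> m (\<integral>x. last hs x \<partial>D))"
  unfolding stat_oracle_def
proof (intro allI impI)
  fix hs :: "(real^'n \<Rightarrow> real) list"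
  assume "valid_query (last hs)"
  then have meas: "last hs \<in> borel_measurable borel" and bd: "\<And>x. \<bar>last hs x\<bar> \<le> 1"
    unfolding valid_query_def by auto
  have m2: "last hs \<in> borel_measurable D"
  proof -
    have "borel_measurable D = (borel_measurable borel :: (real^'n \<Rightarrow> real) set)"
      by (rule measurable_cong_sets) (use assms(2) in auto)
    then show ?thesis using meas by simp
  qed
  interpret prob_space D by fact
  have int: "integrable D (last hs)"
    by (rule integrable_const_bound[where B=1]) (use bd m2 in auto)
  have "\<bar>\<integral>x. last hs x \<partial>D\<bar> \<le> (\<integral>x. 1 \<partial>D)"
    by (rule integral_abs_bound_integral) (use int bd in auto)
  then have "\<bar>\<integral>x. last hs x \<partial>D\<bar> \<le> 1" by (simp add: prob_space)
  from rnd_close[OF assms(3,4) this]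
  show "\<bar>rnd \<tau> m (\<integral>x. last hs x \<partial>D) - (\<integral>x. last hs x \<partial>D)\<bar> \<le> \<tau>" .
qed

lemma main_bound:
  fixes \<D> :: "(real^'n) measure set" and \<Theta> :: "'b set" and \<rho> :: "'b \<Rightarrow> 'b \<Rightarrow> real"
    and \<theta> :: "(real^'n) measure \<Rightarrow> 'b" and \<tau> \<epsilon> \<alpha> :: real and q :: nat
    and P :: "'c measure" and A :: "'c \<Rightarrow> (real list \<Rightarrow> (real^'n \<Rightarrow> real)) \<times> (real list \<Rightarrow> 'b)"
  assumes DD: "\<forall>D\<in>\<D>. prob_space D \<and> sets D = sets borel"
    and MS: "Metric_space \<Theta> \<rho>"
    and th: "\<theta> ` \<D> \<subseteq> \<Theta>"
    and tau: "\<tau> > 0"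
    and est: "rand_sq_estimates q \<tau> \<Theta> \<rho> \<D> \<theta> \<epsilon> \<alpha> P A"
    and S: "finite S" "is_packing (\<theta> ` \<D>) \<rho> \<epsilon> S"
  shows "(1-\<alpha>) * real (card S) \<le> real (Suc (nat \<lfloor>1/\<tau>\<rfloor>)) ^ q"
proof -
  define m where "m = Suc (nat \<lfloor>1/\<tau>\<rfloor>)"
  have Ssub: "S \<subseteq> \<theta> ` \<D>" and sep: "\<And>x y. x\<in>S \<Longrightarrow> y\<in>S \<Longrightarrow> x \<noteq> y \<Longrightarrow> \<rho> x y > 2*\<epsilon>"
    using S(2) unfolding is_packing_def by auto
  have "\<forall>s\<in>S. \<exists>D. D \<in> \<D> \<and> \<theta> D = s" using Ssub by blast
  then obtain Dof where Dof: "\<And>s. s\<in>S \<Longrightarrow> Dof s \<in> \<D> \<and> \<theta> (Dof s) = s" by metis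
  define Orc where "Orc s = (\<lambda>hs. rnd \<tau> m (\<integral>x. last hs x \<partial>(Dof s)))" for s
  have stat: "stat_oracle \<tau> (Dof s) (Orc s)" if "s\<in>S" for s
    unfolding Orc_def using stat_ok[of "Dof s" \<tau> m] Dof[OF that] DD tau m_def by auto
  have ps: "prob_space P" and det: "\<And>c. c\<in>space P \<Longrightarrow> det_sq_alg q \<Theta> (fst (A c)) (snd (A c))"
    using est unfolding rand_sq_estimates_def by auto
  interpret P: prob_space P by fact
  have est3: "\<And>D Or. D\<in>\<D> \<Longrightarrow> stat_oracle \<tau> D Or \<Longrightarrow>
      (\<exists>T\<in>sets P. T \<subseteq> {c\<in>space P. \<rho> (\<theta> D) (snd (A c) (sq_run (fst (A c)) Or q)) \<le> \<epsilon>}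
                   \<and> 1 - \<alpha> \<le> measure P T)"
    using est unfolding rand_sq_estimates_def by blast
  have ex1: "\<exists>T. T\<in>sets P \<and> T \<subseteq> {c\<in>space P. \<rho> s (snd (A c) (sq_run (fst (A c)) (Orc s) q)) \<le> \<epsilon>}
                   \<and> 1 - \<alpha> \<le> measure P T" if "s\<in>S" for s
  proof -
    have "Dof s \<in> \<D>" "\<theta> (Dof s) = s" using Dof[OF that] by auto
    with est3[OF this(1) stat[OF that]] show ?thesis by auto
  qed
  then have "\<forall>s\<in>S. \<exists>T. T\<in>sets P \<and> T \<subseteq> {c\<in>space P. \<rho> s (snd (A c) (sq_run (fst (A c)) (Orc s) q)) \<le> \<epsilon>}
                   \<and> 1 - \<alpha> \<le> measure P T" by blast
  from bchoice[OF this] obtain T where T0: "\<forall>s\<in>S. T s\<in>sets P \<and> T s \<subseteq> {c\<in>space P. \<rho> s (snd (A c) (sq_run (fst (A c)) (Orc s) q)) \<le> \<epsilon>}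
                   \<and> 1 - \<alpha> \<le> measure P (T s)" by blast
  have T: "\<And>s. s\<in>S \<Longrightarrow> T s \<in> sets P \<and> T s \<subseteq> {c\<in>space P. \<rho> s (snd (A c) (sq_run (fst (A c)) (Orc s) q)) \<le> \<epsilon>}
                   \<and> 1 - \<alpha> \<le> measure P (T s)" using T0 by blast
  define G where "G = (\<lambda>k. -1 + \<tau> + 2*\<tau>*real k) ` {..<m}"
  have finG: "finite G" unfolding G_def by auto
  have "card G \<le> card {..<m}" unfolding G_def by (rule card_image_le) simp
  then have cardG: "card G \<le> m" by simp
  have rangeOrc: "range (Orc s) \<subseteq> G" for s
    unfolding Orc_def G_def using rnd_range[of \<tau> m] m_def by auto
  define L where "L = {xs. set xs \<subseteq> G \<and> length xs = q}"
  have finL: "finite L" unfolding L_def using finG finite_lists_length_eq by blast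
  have cardL: "card L \<le> m ^ q" unfolding L_def card_lists_length_eq[OF finG]
    using cardG power_mono by blast
  have pw: "(\<Sum>s\<in>S. indicator (T s) c) \<le> real m ^ q" if c: "c \<in> space P" for c
  proof -
    define f where "f s = sq_run (fst (A c)) (Orc s) q" for s
    have cnt: "(\<Sum>s\<in>S. indicator (T s) c :: real) = real (card (S \<inter> {s. c \<in> T s}))"
    proof -
      have "(\<Sum>s\<in>S. indicator (T s) c :: real) = (\<Sum>s\<in>S. if s \<in> {s. c \<in> T s} then 1 else 0)"
        by (intro sum.cong) (auto simp: indicator_def)
      also have "\<dots> = (\<Sum>s\<in>S \<inter> {s. c \<in> T s}. 1)"
        by (rule sum.inter_restrict[symmetric]) (rule S(1))
      also have "\<dots> = real (card (S \<inter> {s. c \<in> T s}))" by simp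
      finally show ?thesis .
    qed
    have "card (S \<inter> {s. c \<in> T s}) \<le> card L"
    proof (rule card_inj_on_le[where f=f])
      show "f ` (S \<inter> {s. c \<in> T s}) \<subseteq> L"
        unfolding f_def L_def using sq_run_props rangeOrc by blast
      show "finite L" by fact
      show "inj_on f (S \<inter> {s. c \<in> T s})"
      proof (rule inj_onI, rule ccontr)
        fix s s' assume s: "s \<in> S \<inter> {s. c \<in> T s}" and s': "s' \<in> S \<inter> {s. c \<in> T s}"
          and eq: "f s = f s'" and ne: "s \<noteq> s'"
        define ot where "ot = snd (A c) (f s)"
        have ot: "ot \<in> \<Theta>" using det[OF c] unfolding det_sq_alg_def ot_def by auto
        have d1: "\<rho> s ot \<le> \<epsilon>" using T[of s] s unfolding ot_def f_def by auto
        have d2: "\<rho> s' ot \<le> \<epsilon>" using T[of s'] s' eq unfolding ot_def f_def by auto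
        have sT: "s \<in> \<Theta>" "s' \<in> \<Theta>" using s s' Ssub th by auto
        have "\<rho> s s' \<le> \<rho> s ot + \<rho> s' ot"
          using Metric_space.triangle'[OF MS sT(1) ot sT(2)] .
        then show False using sep[of s s'] s s' ne d1 d2 by auto
      qed
    qed
    then have "card (S \<inter> {s. c \<in> T s}) \<le> m ^ q" using cardL by linarith
    then have "real (card (S \<inter> {s. c \<in> T s})) \<le> real (m ^ q)" by (simp only: of_nat_le_iff)
    then show ?thesis unfolding cnt by simp
  qed
  have intT: "integrable P (indicator (T s) :: 'c \<Rightarrow> real)" if "s\<in>S" for s
    using T[OF that] by (intro integrable_real_indicator) (auto simp: less_top[symmetric] P.emeasure_finite)
  have "(1-\<alpha>) * real (card S) = (\<Sum>s\<in>S. 1 - \<alpha>)" by simp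
  also have "\<dots> \<le> (\<Sum>s\<in>S. measure P (T s))" using T by (intro sum_mono) auto
  also have "\<dots> = (\<Sum>s\<in>S. integral\<^sup>L P (indicator (T s)))"
    using T by (intro sum.cong refl) (simp add: Int_absorb2 sets.sets_into_space)
  also have "\<dots> = (\<integral>c. (\<Sum>s\<in>S. indicator (T s) c) \<partial>P)"
    by (rule Bochner_Integration.integral_sum[symmetric]) (rule intT)
  also have "\<dots> \<le> (\<integral>c. real m ^ q \<partial>P)"
    by (rule integral_mono) (use intT pw in auto)
  also have "\<dots> = real m ^ q" by (simp add: P.prob_space)
  finally show ?thesis unfolding m_def .
qed

theorem theoremH3:
  fixes \<D> :: "(real^'n) measure set" and \<Theta> :: "'b set" and \<rho> :: "'b \<Rightarrow> 'b \<Rightarrow> real"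
    and \<theta> :: "(real^'n) measure \<Rightarrow> 'b" and \<tau> \<epsilon> \<alpha> :: real and q :: nat
    and P :: "'c measure" and A :: "'c \<Rightarrow> (real list \<Rightarrow> (real^'n \<Rightarrow> real)) \<times> (real list \<Rightarrow> 'b)"
  assumes "\<forall>D\<in>\<D>. prob_space D \<and> sets D = sets borel"
    and "Metric_space \<Theta> \<rho>"
    and "\<theta> ` \<D> \<subseteq> \<Theta>"
    and "\<tau> > 0" and "\<epsilon> > 0" and "0 \<le> \<alpha>" and "\<alpha> < 1"
    and "rand_sq_estimates q \<tau> \<Theta> \<rho> \<D> \<theta> \<epsilon> \<alpha> P A"
  shows "packing_number (\<theta> ` \<D>) \<rho> \<epsilon> \<noteq> \<infinity> \<and>
    (let K = (1 - \<alpha>) * real (the_enat (packing_number (\<theta> ` \<D>) \<rho> \<epsilon>));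
         B = 1 + real_of_int \<lfloor>1 / \<tau>\<rfloor>
     in (0 < K \<longrightarrow> ln K \<le> real q * ln B) \<and>
        (0 < K \<and> \<tau> \<le> 1 \<longrightarrow> ln K / ln B \<le> real q))"
proof -
  define m where "m = Suc (nat \<lfloor>1/\<tau>\<rfloor>)"
  have mb: "(1-\<alpha>) * real (card S) \<le> real m ^ q" if "finite S" "is_packing (\<theta> ` \<D>) \<rho> \<epsilon> S" for S
    unfolding m_def by (rule main_bound[OF assms(1,2,3,4,8) that])
  define N where "N = nat \<lceil>real m ^ q / (1-\<alpha>)\<rceil>"
  define X where "X = {card S | S. finite S \<and> is_packing (\<theta> ` \<D>) \<rho> \<epsilon> S}"
  have a1: "0 < 1 - \<alpha>" using assms(7) by simp
  have XN: "X \<subseteq> {..N}"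
  proof
    fix k assume "k \<in> X"
    then obtain S where S: "finite S" "is_packing (\<theta> ` \<D>) \<rho> \<epsilon> S" "k = card S" unfolding X_def by blast
    have "(1-\<alpha>) * real k \<le> real m ^ q" using mb[OF S(1,2)] S(3) by simp
    then have "real k \<le> real m ^ q / (1-\<alpha>)" using a1 by (simp add: field_simps)
    then have "k \<le> N" unfolding N_def by linarith
    then show "k \<in> {..N}" by simp
  qed
  have finX: "finite X" using XN finite_subset by blast
  have "0 \<in> X" unfolding X_def by (rule CollectI, rule exI[of _ "{}"]) (simp add: is_packing_def)
  then have neX: "X \<noteq> {}" by blast
  define k where "k = Max X"
  have kX: "k \<in> X" unfolding k_def using finX neX by simp
  have kge: "x \<le> k" if "x \<in> X" for x unfolding k_def using finX that by simp
  obtain S0 where S0: "finite S0" "is_packing (\<theta> ` \<D>) \<rho> \<epsilon> S0" "k = card S0"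
    using kX unfolding X_def by blast
  have pn: "packing_number (\<theta> ` \<D>) \<rho> \<epsilon> = enat k"
    unfolding packing_number_def
  proof (rule antisym)
    show "Sup {enat (card S) |S. finite S \<and> is_packing (\<theta> ` \<D>) \<rho> \<epsilon> S} \<le> enat k"
    proof (rule Sup_least)
      fix x assume "x \<in> {enat (card S) |S. finite S \<and> is_packing (\<theta> ` \<D>) \<rho> \<epsilon> S}"
      then obtain S where "x = enat (card S)" "finite S" "is_packing (\<theta> ` \<D>) \<rho> \<epsilon> S" by blast
      moreover have "card S \<in> X" unfolding X_def using calculation by blast
      ultimately show "x \<le> enat k" using kge by simp
    qed
    show "enat k \<le> Sup {enat (card S) |S. finite S \<and> is_packing (\<theta> ` \<D>) \<rho> \<epsilon> S}"
      by (rule Sup_upper) (use S0 in auto)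
  qed
  have Km: "(1-\<alpha>) * real k \<le> real m ^ q" using mb[OF S0(1,2)] S0(3) by simp
  have Bm: "1 + real_of_int \<lfloor>1 / \<tau>\<rfloor> = real m"
  proof -
    have "\<lfloor>1/\<tau>\<rfloor> \<ge> 0" using assms(4) by simp
    then show ?thesis unfolding m_def by simp
  qed
  have m0: "real m > 0" unfolding m_def by simp
  have L1: "ln ((1-\<alpha>) * real k) \<le> real q * ln (real m)" if "0 < (1-\<alpha>) * real k"
  proof -
    have "ln ((1-\<alpha>) * real k) \<le> ln (real m ^ q)"
      using Km that m0 by (subst ln_le_cancel_iff) auto
    also have "\<dots> = real q * ln (real m)" using m0 by (simp add: ln_realpow)
    finally show ?thesis .
  qed
  have L2: "ln ((1-\<alpha>) * real k) / ln (real m) \<le> real q" if "0 < (1-\<alpha>) * real k" "\<tau> \<le> 1"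
  proof -
    have "1/\<tau> \<ge> 1" using that(2) assms(4) by (simp add: field_simps)
    then have "\<lfloor>1/\<tau>\<rfloor> \<ge> 1" by linarith
    then have "real m \<ge> 2" unfolding m_def by linarith
    then have lp: "ln (real m) > 0" by simp
    show ?thesis using L1[OF that(1)] lp by (simp add: pos_divide_le_eq)
  qed
  show ?thesis unfolding pn Let_def Bm using L1 L2 by simp
qed

end
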